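(* Consider a $K$-armed bandit with $K>1$ whose realized rewards satisfy $R_t(a)\in[-R_{\max},R_{\max}]$, and let $\eta>0$. Let $\pi_{\boldsymbol\theta_t}$ be a softmax policy, $a_t\sim\pi_{\boldsymbol\theta_t}$, $\hat r_t(a)=\mathbb I\{a_t=a\}R_t(a_t)/\pi_{\boldsymbol\theta_t}(a)$, and $$\widehat\nabla\Phi_\eta(\boldsymbol\theta_t)=(\mathrm{diag}(\pi_{\boldsymbol\theta_t})-\pi_{\boldsymbol\theta_t}\pi_{\boldsymbol\theta_t}^\top)\hat{\mathbf r}_t+\frac1\eta(\mathbf 1-K\pi_{\boldsymbol\theta_t}).$$ Then $$\|\widehat\nabla\Phi_\eta(\boldsymbol\theta_t)\|_2\le\sqrt2R_{\max}\big(1-\pi_{\boldsymbol\theta_t}(a_t)\big)+\frac{2K}{\eta}.$$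
   Context: Softmax policy $\pi_{\boldsymbol\theta}(a)=e^{\theta(a)}/\sum_be^{\theta(b)}$; $\widehat\nabla\Phi_\eta$ is the LB-SGB stochastic gradient of $\Phi_\eta(\boldsymbol\theta)=\pi_{\boldsymbol\theta}^\top\mathbf r+\frac1\eta\sum_a\log\pi_{\boldsymbol\theta}(a)$. *)

theory Defs
  imports "HOL-Analysis.Analysis"
begin

text \<open>Arms are indexed by a finite type 'n, so K = CARD('n); vectors in R^K are real^'n.\<close>

definition softmax :: "real^'n \<Rightarrow> real^'n" where
  "softmax \<theta> = (\<chi> a. exp (\<theta>$a) / (\<Sum>b\<in>UNIV. exp (\<theta>$b)))"

definition diag_mat :: "real^'n \<Rightarrow> real^'n^'n" where
  "diag_mat v = (\<chi> i j. if i = j then v$i else 0)"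

definition outer_prod :: "real^'n \<Rightarrow> real^'n \<Rightarrow> real^'n^'n" where
  "outer_prod u v = (\<chi> i j. u$i * v$j)"

definition iw_est :: "real^'n \<Rightarrow> 'n \<Rightarrow> real^'n \<Rightarrow> real^'n" where
  "iw_est p act R = (\<chi> a. (if act = a then 1 else 0) * R$act / p$a)"

definition lbsgb_grad :: "real \<Rightarrow> real^'n \<Rightarrow> 'n \<Rightarrow> real^'n \<Rightarrow> real^'n" where
  "lbsgb_grad \<eta> \<theta> act R =
     (diag_mat (softmax \<theta>) - outer_prod (softmax \<theta>) (softmax \<theta>)) *v iw_est (softmax \<theta>) act R
     + (1 / \<eta>) *\<^sub>R (vec 1 - real CARD('n) *\<^sub>R softmax \<theta>)"

end

theory Submission
  imports Defs
begin

theorem lemmaC1: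
  fixes \<theta> R :: "real^'n" and act :: 'n and Rmax \<eta> :: real
  assumes "CARD('n) > 1"
    and "\<eta> > 0"
    and "\<forall>a. R$a \<in> {-Rmax..Rmax}"
  shows "norm (lbsgb_grad \<eta> \<theta> act R)
           \<le> sqrt 2 * Rmax * (1 - softmax \<theta> $ act) + 2 * real CARD('n) / \<eta>"
proof -
  define p where "p = softmax \<theta>"
  define Z where "Z = (\<Sum>b\<in>UNIV. exp (\<theta>$b))"
  have Zpos: "Z > 0" unfolding Z_def by (rule sum_pos) auto
  have pc: "p$a = exp (\<theta>$a) / Z" for a by (simp add: p_def softmax_def Z_def)
  have ppos: "p$a > 0" for a using Zpos by (simp add: pc)
  have psum: "(\<Sum>a\<in>UNIV. p$a) = 1"
    using Zpos by (simp add: pc sum_divide_distrib[symmetric] Z_def)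
  define r where "r = R$act"
  have rle: "\<bar>r\<bar> \<le> Rmax" using assms(3) unfolding r_def by (metis abs_le_iff atLeastAtMost_iff minus_le_iff)
  define v where "v = (\<chi> i. (if i = act then 1 else 0) - p$i :: real^'n)"
  define w where "w = (vec 1 - real CARD('n) *\<^sub>R p :: real^'n)"
  have geq: "lbsgb_grad \<eta> \<theta> act R = r *\<^sub>R v + (1/\<eta>) *\<^sub>R w"
  proof -
    have "((diag_mat p - outer_prod p p) *v iw_est p act R) $ i = (r *\<^sub>R v) $ i" for i
    proof -
      have "((diag_mat p - outer_prod p p) *v iw_est p act R) $ i
          = (\<Sum>j\<in>UNIV. (if j = act then ((if i = j then p$i else 0) - p$i * p$j) * (R$act / p$act) else 0))"
        unfolding matrix_vector_mult_def diag_mat_def outer_prod_def iw_est_def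
        by (simp only: vec_lambda_beta, intro sum.cong) auto
      also have "\<dots> = ((if i = act then p$i else 0) - p$i * p$act) * (R$act / p$act)"
        by simp
      also have "\<dots> = (r *\<^sub>R v) $ i"
        using ppos[of act] by (auto simp: v_def r_def field_simps)
      finally show ?thesis .
    qed
    then show ?thesis unfolding lbsgb_grad_def p_def[symmetric] w_def
      by (simp add: vec_eq_iff)
  qed
  have nv: "norm v \<le> sqrt 2 * (1 - p$act)"
  proof -
    define S where "S = (\<Sum>b\<in>UNIV - {act}. p$b)"
    have S: "S = 1 - p$act" using psum
      by (simp add: S_def sum_diff1)
    have "(\<Sum>b\<in>UNIV - {act}. (p$b)^2) \<le> (\<Sum>b\<in>UNIV - {act}. p$b * S)"
    proof (rule sum_mono)
      fix b assume b: "b \<in> UNIV - {act}"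
      have "p$b \<le> S" unfolding S_def
        by (rule member_le_sum) (use b ppos in \<open>auto intro: less_imp_le\<close>)
      then show "(p$b)^2 \<le> p$b * S" using ppos[of b]
        by (simp add: power2_eq_square mult_left_mono)
    qed
    also have "\<dots> = S^2" by (simp add: S_def sum_distrib_right power2_eq_square)
    finally have A: "(\<Sum>b\<in>UNIV - {act}. (p$b)^2) \<le> S^2" .
    have "norm v ^ 2 = (\<Sum>i\<in>UNIV. (v$i)^2)"
      by (simp add: norm_eq_sqrt_inner inner_vec_def power2_eq_square sum_nonneg)
    also have "\<dots> = (v$act)^2 + (\<Sum>i\<in>UNIV - {act}. (v$i)^2)"
      by (simp add: sum.remove)
    also have "\<dots> = (1 - p$act)^2 + (\<Sum>b\<in>UNIV - {act}. (p$b)^2)"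
      by (simp add: v_def)
    also have "\<dots> \<le> 2 * (1 - p$act)^2" using A S by simp
    also have "\<dots> = (sqrt 2 * (1 - p$act))^2" by (simp add: power_mult_distrib)
    finally have "norm v ^ 2 \<le> (sqrt 2 * (1 - p$act))^2" .
    moreover have "1 - p$act \<ge> 0" using S A
      by (smt (verit) S_def ppos sum_nonneg)
    ultimately show ?thesis
      by (meson power2_le_imp_le real_sqrt_ge_zero mult_nonneg_nonneg zero_le_numeral)
  qed
  have nw: "norm w \<le> 2 * real CARD('n)"
  proof -
    have "norm w \<le> norm (vec 1 :: real^'n) + norm (real CARD('n) *\<^sub>R p)"
      unfolding w_def by (rule norm_triangle_ineq4)
    also have "norm (vec 1 :: real^'n) \<le> real CARD('n)"
      using norm_le_l1_cart[of "vec 1 :: real^'n"] by simp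
    also have "norm (real CARD('n) *\<^sub>R p) \<le> real CARD('n)"
    proof -
      have "norm p \<le> 1" using norm_le_l1_cart[of p] psum ppos
        by (smt (verit) abs_of_pos sum.cong)
      then show ?thesis by (simp add: mult_left_le)
    qed
    finally show ?thesis by simp
  qed
  have "norm (lbsgb_grad \<eta> \<theta> act R) \<le> norm (r *\<^sub>R v) + norm ((1/\<eta>) *\<^sub>R w)"
    unfolding geq by (rule norm_triangle_ineq)
  also have "norm (r *\<^sub>R v) \<le> Rmax * (sqrt 2 * (1 - p$act))"
    using mult_mono[OF rle nv] rle by simp
  also have "norm ((1/\<eta>) *\<^sub>R w) \<le> 2 * real CARD('n) / \<eta>"
    using assms(2) nw by (simp add: divide_right_mono)
  finally show ?thesis by (simp add: p_def mult_ac)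
qed

end
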